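(* Let $\mathcal{A}$ be a pOC with state set $Q$ whose underlying chain $\mathcal{X}$, with transition matrix $A$, is strongly connected. Let $\alpha$ be the invariant distribution of $\mathcal{X}$, $s$ the vector of expected counter changes, and $t=\alpha s$ the trend. Then: (a) With $W:=\mathbf{1}\alpha$, i.e., the matrix each of whose rows equals $\alpha$, the matrix $Z:=(I-A+W)^{-1}$ exists and $Zs$ is a potential. (b) There exists a potential $v$ with $v_{\max}-v_{\min}\le 2|Q|/x_{\min}^{|Q|}$, where $x_{\min}$ is the smallest nonzero entry of $A$.
   Context: A pOC has finite state set $Q$ and positive rules $\delta^{>0}\subseteq Q\times\{-1,0,1\}\times Q$ with probabilities $P^{>0}$, which form a positive probability distribution over the outgoing positive rules of each state. $\mathcal{X}$ is the finite Markov chain on $Q$ with transition matrix $A_{pq}=\sum_cP^{>0}(p,c,q)$. $s_p=\sum_{(p,c,q)\in\delta^{>0}}P^{>0}(p,c,q)\cdot c$. A potential is any vector $v\in\mathbb{R}^Q$ satisfying $s+Av=v+\mathbf{1}t$, where $\mathbf{1}$ is the all-ones vector. $v_{\max}$ and $v_{\min}$ denote the largest and smallest components of $v$. *)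

theory Defs
  imports "HOL-Analysis.Analysis"
begin

text \<open>A pOC restricted to its positive rules.
  P p c q is the probability of the positive rule (p,c,q); the rules are exactly
  the triples with positive probability, c ranging over {-1,0,1}.\<close>

definition pOC_pos :: "('q::finite \<Rightarrow> int \<Rightarrow> 'q \<Rightarrow> real) \<Rightarrow> bool" where
  "pOC_pos P \<longleftrightarrow>
     (\<forall>p c q. P p c q \<ge> 0) \<and>
     (\<forall>p c q. c \<notin> {-1, 0, 1} \<longrightarrow> P p c q = 0) \<and>
     (\<forall>p. (\<Sum>c\<in>{-1, 0, 1::int}. \<Sum>q\<in>UNIV. P p c q) = 1)"

definition trans_mat :: "('q::finite \<Rightarrow> int \<Rightarrow> 'q \<Rightarrow> real) \<Rightarrow> real^'q^'q" where
  "trans_mat P = (\<chi> p q. \<Sum>c\<in>{-1, 0, 1::int}. P p c q)"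

definition exp_change :: "('q::finite \<Rightarrow> int \<Rightarrow> 'q \<Rightarrow> real) \<Rightarrow> real^'q" where
  "exp_change P = (\<chi> p. \<Sum>c\<in>{-1, 0, 1::int}. \<Sum>q\<in>UNIV. P p c q * of_int c)"

definition strongly_connected_mat :: "real^'q^'q \<Rightarrow> bool" where
  "strongly_connected_mat A \<longleftrightarrow> (\<forall>p q. (p, q) \<in> {(p, q). A $ p $ q > 0}\<^sup>*)"

definition invariant_distribution :: "real^'q^'q \<Rightarrow> real^'q \<Rightarrow> bool" where
  "invariant_distribution A \<alpha> \<longleftrightarrow>
     (\<forall>q. \<alpha> $ q \<ge> 0) \<and> sum (\<lambda>q. \<alpha> $ q) UNIV = 1 \<and> \<alpha> v* A = \<alpha>"

definition potential :: "real^'q^'q \<Rightarrow> real^'q \<Rightarrow> real \<Rightarrow> real^'q \<Rightarrow> bool" where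
  "potential A s t v \<longleftrightarrow> s + A *v v = v + (\<chi> i. t)"

definition vmax :: "real^'q::finite \<Rightarrow> real" where
  "vmax v = Max (range (\<lambda>i. v $ i))"

definition vmin :: "real^'q::finite \<Rightarrow> real" where
  "vmin v = Min (range (\<lambda>i. v $ i))"

end

theory Submission
  imports Defs
begin

lemma rtrancl_cross:
  assumes "(p, q) \<in> E\<^sup>*" "p \<notin> S" "q \<in> S"
  shows "\<exists>a b. (a, b) \<in> E \<and> a \<notin> S \<and> b \<in> S"
  using assms
proof (induction rule: rtrancl_induct)
  case base then show ?case by simp
next
  case (step y z)
  show ?case
  proof (cases "y \<in> S")
    case True then show ?thesis using step by blast
  next
    case False then show ?thesis using step by blast
  qed
qed

lemma rtrancl_closed:
  assumes "(p, q) \<in> E\<^sup>*" "p \<in> S" "\<And>a b. (a, b) \<in> E \<Longrightarrow> a \<in> S \<Longrightarrow> b \<in> S"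
  shows "q \<in> S"
  using assms by (induction rule: rtrancl_induct) auto

lemma exists_argmax:
  fixes f :: "'a::finite \<Rightarrow> real"
  shows "\<exists>p. \<forall>r. f r \<le> f p"
proof -
  have "Max (range f) \<in> range f" by (intro Max_in) auto
  then obtain p where "f p = Max (range f)" by (metis imageE)
  show ?thesis
  proof (intro exI allI)
    fix r
    have "f r \<le> Max (range f)" by simp
    then show "f r \<le> f p" using \<open>f p = Max (range f)\<close> by simp
  qed
qed

lemma sum3: "(\<Sum>c\<in>{-1, 0, 1::int}. f c) = f (-1) + f 0 + f 1"
  by (simp add: add.assoc)

locale poc_setup =
  fixes P :: "'q::finite \<Rightarrow> int \<Rightarrow> 'q \<Rightarrow> real" and \<alpha> :: "real^'q"
  assumes poc: "pOC_pos P"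
    and sc: "strongly_connected_mat (trans_mat P)"
    and inv: "invariant_distribution (trans_mat P) \<alpha>"
begin

abbreviation "A \<equiv> trans_mat P"
abbreviation "s \<equiv> exp_change P"

lemma A_nonneg: "A $ p $ q \<ge> 0"
  using poc unfolding pOC_pos_def trans_mat_def by (simp add: sum_nonneg)

lemma A_rowsum: "(\<Sum>q\<in>UNIV. A $ p $ q) = 1"
proof -
  have "(\<Sum>q\<in>UNIV. A $ p $ q) = (\<Sum>q\<in>UNIV. \<Sum>c\<in>{-1, 0, 1::int}. P p c q)"
    by (simp add: trans_mat_def)
  also have "\<dots> = (\<Sum>c\<in>{-1, 0, 1::int}. \<Sum>q\<in>UNIV. P p c q)" by (rule sum.swap)
  also have "\<dots> = 1" using poc unfolding pOC_pos_def by blast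
  finally show ?thesis .
qed

lemma s_bound: "\<bar>s $ p\<bar> \<le> 1"
proof -
  have nn: "\<And>c. (\<Sum>q\<in>UNIV. P p c q) \<ge> 0" using poc unfolding pOC_pos_def by (simp add: sum_nonneg)
  have one: "(\<Sum>q\<in>UNIV. P p (-1) q) + (\<Sum>q\<in>UNIV. P p 0 q) + (\<Sum>q\<in>UNIV. P p 1 q) = 1"
    using poc unfolding pOC_pos_def sum3 by blast
  have "s $ p = (\<Sum>q\<in>UNIV. P p 1 q) - (\<Sum>q\<in>UNIV. P p (-1) q)"
    by (simp add: exp_change_def sum_negf)
  then show ?thesis using nn[of 1] nn[of "-1"] nn[of 0] one by linarith
qed

lemma alpha_nonneg: "\<alpha> $ q \<ge> 0" and alpha_sum: "(\<Sum>q\<in>UNIV. \<alpha> $ q) = 1"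
  using inv unfolding invariant_distribution_def by auto

lemma alpha_inv: "(\<Sum>p\<in>UNIV. \<alpha> $ p * A $ p $ q) = \<alpha> $ q"
proof -
  have "\<alpha> v* A = \<alpha>" using inv unfolding invariant_distribution_def by auto
  then have "(\<alpha> v* A) $ q = \<alpha> $ q" by simp
  then show ?thesis by (simp add: vector_matrix_mult_def)
qed

lemma alpha_A: "\<alpha> \<bullet> (A *v y) = \<alpha> \<bullet> y"
proof -
  have "\<alpha> \<bullet> (A *v y) = (\<Sum>p\<in>UNIV. \<alpha> $ p * (\<Sum>q\<in>UNIV. A $ p $ q * y $ q))"
    by (simp add: inner_vec_def matrix_vector_mult_def)
  also have "\<dots> = (\<Sum>p\<in>UNIV. \<Sum>q\<in>UNIV. \<alpha> $ p * A $ p $ q * y $ q)"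
    by (simp add: sum_distrib_left mult.assoc)
  also have "\<dots> = (\<Sum>q\<in>UNIV. \<Sum>p\<in>UNIV. \<alpha> $ p * A $ p $ q * y $ q)" by (rule sum.swap)
  also have "\<dots> = (\<Sum>q\<in>UNIV. (\<Sum>p\<in>UNIV. \<alpha> $ p * A $ p $ q) * y $ q)"
    by (simp add: sum_distrib_right)
  also have "\<dots> = \<alpha> \<bullet> y" by (simp add: alpha_inv inner_vec_def)
  finally show ?thesis .
qed

lemma t_bound: "\<bar>\<alpha> \<bullet> s\<bar> \<le> 1"
proof -
  have "\<bar>\<alpha> \<bullet> s\<bar> \<le> (\<Sum>i\<in>UNIV. \<bar>\<alpha> $ i * s $ i\<bar>)"
    unfolding inner_vec_def inner_real_def by (rule sum_abs)
  also have "\<dots> \<le> (\<Sum>i\<in>UNIV. \<alpha> $ i)"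
  proof (rule sum_mono)
    fix i
    have "\<bar>\<alpha> $ i * s $ i\<bar> = \<alpha> $ i * \<bar>s $ i\<bar>" using alpha_nonneg by (simp add: abs_mult)
    also have "\<dots> \<le> \<alpha> $ i * 1" using s_bound alpha_nonneg by (intro mult_left_mono) auto
    finally show "\<bar>\<alpha> $ i * s $ i\<bar> \<le> \<alpha> $ i" by simp
  qed
  finally show ?thesis using alpha_sum by simp
qed

abbreviation "K \<equiv> mat 1 - A + (\<chi> i j. \<alpha> $ j)"

lemma W_mult: "(\<chi> i j. \<alpha> $ j) *v y = (\<chi> i. \<alpha> \<bullet> y)"
proof (rule iffD2[OF vec_eq_iff], intro allI)
  fix i
  show "((\<chi> i j. \<alpha> $ j) *v y) $ i = (\<chi> i. \<alpha> \<bullet> y) $ i"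
    unfolding matrix_vector_mult_def inner_vec_def inner_real_def by simp
qed

lemma K_mult: "K *v y = y - A *v y + (\<chi> i. \<alpha> \<bullet> y)"
  unfolding matrix_vector_mult_add_rdistrib matrix_vector_mult_diff_rdistrib W_mult matrix_vector_mul_lid
  by simp

lemma alpha_K: "\<alpha> \<bullet> (K *v y) = \<alpha> \<bullet> y"
proof -
  have "\<alpha> \<bullet> (\<chi> i. \<alpha> \<bullet> y) = \<alpha> \<bullet> y"
    using alpha_sum by (simp add: inner_vec_def inner_real_def sum_distrib_right[symmetric])
  then show ?thesis unfolding K_mult inner_add_right inner_diff_right alpha_A by simp
qed

lemma harmonic_const:
  assumes "A *v y = y"
  shows "y $ p = y $ q"
proof -
  obtain p0 where p0: "\<forall>r. y $ r \<le> y $ p0"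
    using exists_argmax[of "\<lambda>r. y $ r"] by blast
  define mx where "mx = y $ p0"
  have closed: "b \<in> {r. y $ r = mx}" if "(a, b) \<in> {(p, q). A $ p $ q > 0}" "a \<in> {r. y $ r = mx}" for a b
  proof -
    have Aab: "A $ a $ b > 0" using that by auto
    have ya: "y $ a = mx" using that by auto
    have "y $ a = (A *v y) $ a" using assms by simp
    also have "\<dots> = (\<Sum>r\<in>UNIV. A $ a $ r * y $ r)" by (simp add: matrix_vector_mult_def)
    finally have e: "(\<Sum>r\<in>UNIV. A $ a $ r * y $ r) = mx" using ya by simp
    have "(\<Sum>r\<in>UNIV. A $ a $ r * (mx - y $ r)) = mx * (\<Sum>r\<in>UNIV. A $ a $ r) - (\<Sum>r\<in>UNIV. A $ a $ r * y $ r)"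
      by (simp add: algebra_simps sum_subtractf sum_distrib_left)
    also have "\<dots> = 0" using e A_rowsum by simp
    finally have z: "(\<Sum>r\<in>UNIV. A $ a $ r * (mx - y $ r)) = 0" .
    have nn: "\<forall>r\<in>UNIV. A $ a $ r * (mx - y $ r) \<ge> 0"
      using A_nonneg p0 mx_def by (simp add: mult_nonneg_nonneg)
    have "A $ a $ b * (mx - y $ b) = 0"
      using sum_nonneg_eq_0_iff[of UNIV "\<lambda>r. A $ a $ r * (mx - y $ r)"] nn z by simp
    then show ?thesis using Aab by simp
  qed
  have "\<forall>r. y $ r = mx"
  proof
    fix r
    have "(p0, r) \<in> {(p, q). A $ p $ q > 0}\<^sup>*" using sc unfolding strongly_connected_mat_def by blast
    from rtrancl_closed[OF this _ closed] show "y $ r = mx" by (simp add: mx_def)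
  qed
  then show ?thesis by simp
qed

lemma K_inj: "inj ((*v) K)"
proof -
  have "y = 0" if "K *v y = 0" for y
  proof -
    have a0: "\<alpha> \<bullet> y = 0" using alpha_K[of y] that by simp
    then have "y - A *v y = 0" using that unfolding K_mult by (simp add: vec_eq_iff)
    then have "A *v y = y" by simp
    then have c: "\<And>p q. y $ p = y $ q" by (rule harmonic_const)
    have "\<alpha> \<bullet> y = (\<Sum>q\<in>UNIV. \<alpha> $ q) * y $ undefined"
      by (simp add: inner_vec_def inner_real_def sum_distrib_right) (metis c)
    then have u: "y $ undefined = 0" using a0 alpha_sum by simp
    show ?thesis
    proof (rule iffD2[OF vec_eq_iff], intro allI)
      fix i show "y $ i = 0 $ i" using c[of i undefined] u by simp
    qed
  qed
  then show ?thesis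
    by (metis (no_types, lifting) injI matrix_vector_mult_diff_distrib right_minus_eq)
qed

lemma K_invertible: "invertible K"
  using K_inj matrix_left_invertible_injective invertible_left_inverse by blast

lemma potential_of_K:
  assumes "K *v v = s"
  shows "potential A s (\<alpha> \<bullet> s) v"
proof -
  have "\<alpha> \<bullet> v = \<alpha> \<bullet> s" using alpha_K[of v] assms by simp
  then show ?thesis using assms unfolding potential_def K_mult
    by (simp add: vec_eq_iff algebra_simps)
qed

end

lemma vmin_le: "vmin v \<le> v $ i" and vmax_ge: "v $ i \<le> vmax v"
  unfolding vmin_def vmax_def by simp_all

lemma vmin_ex: "\<exists>q. v $ q = vmin v"
proof -
  have "vmin v \<in> range (\<lambda>i. v $ i)" unfolding vmin_def by (intro Min_in) auto
  then show ?thesis by (metis imageE)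
qed

lemma vmax_ex: "\<exists>q. v $ q = vmax v"
proof -
  have "vmax v \<in> range (\<lambda>i. v $ i)" unfolding vmax_def by (intro Max_in) auto
  then show ?thesis by (metis imageE)
qed

context poc_setup
begin

lemma bound_potential:
  assumes pot: "potential A s (\<alpha> \<bullet> s) v"
  shows "vmax v - vmin v \<le> 2 * real CARD('q)
              / (Min {x. \<exists>p q. x = A $ p $ q \<and> x \<noteq> 0}) ^ CARD('q)"
proof -
  define X where "X = {x. \<exists>p q. x = A $ p $ q \<and> x \<noteq> 0}"
  define x where "x = Min X"
  have "X \<subseteq> (\<lambda>(p, q). A $ p $ q) ` UNIV" unfolding X_def by auto
  then have finX: "finite X" by (rule finite_subset) simp
  have "X \<noteq> {}"
  proof
    assume "X = {}"
    then have "\<And>q. A $ undefined $ q = 0" unfolding X_def by auto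
    then show False using A_rowsum[of undefined] by simp
  qed
  then have "x \<in> X" unfolding x_def using finX by (intro Min_in) auto
  then obtain p0 q0 where xpq: "x = A $ p0 $ q0" "x \<noteq> 0" unfolding X_def by auto
  then have xpos: "x > 0" using A_nonneg[of p0 q0] by simp
  have x1: "x \<le> 1"
  proof -
    have "A $ p0 $ q0 \<le> (\<Sum>q\<in>UNIV. A $ p0 $ q)"
      by (rule member_le_sum) (auto simp: A_nonneg)
    then show ?thesis using xpq A_rowsum by simp
  qed
  have xle: "x \<le> A $ p $ q" if "A $ p $ q > 0" for p q
    unfolding x_def using finX that by (intro Min_le) (auto simp: X_def)
  define mn where "mn = vmin v"
  define M where "M = vmax v - vmin v"
  define w where "w p = v $ p - mn" for p
  have w0: "w p \<ge> 0" for p unfolding w_def mn_def using vmin_le by simp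
  have wM: "w p \<le> M" for p unfolding w_def mn_def M_def using vmax_ge by simp
  have M0: "M \<ge> 0" using w0 wM order_trans by blast
  obtain q1 where q1: "w q1 = 0" using vmin_ex[of v] unfolding w_def mn_def by auto
  obtain p1 where p1: "w p1 = M" using vmax_ex[of v] unfolding w_def M_def mn_def by auto
  define t where "t = \<alpha> \<bullet> s"
  define d where "d p = s $ p - t" for p
  have d2: "d p \<le> 2" for p using s_bound[of p] t_bound unfolding d_def t_def by linarith
  have eq: "w p = d p + (\<Sum>r\<in>UNIV. A $ p $ r * w r)" for p
  proof -
    have "s $ p + (A *v v) $ p = v $ p + t"
      using pot unfolding potential_def t_def by (simp add: vec_eq_iff)
    moreover have "(A *v v) $ p = (\<Sum>r\<in>UNIV. A $ p $ r * w r) + mn"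
    proof -
      have "(\<Sum>r\<in>UNIV. A $ p $ r * w r) = (\<Sum>r\<in>UNIV. A $ p $ r * v $ r) - mn * (\<Sum>r\<in>UNIV. A $ p $ r)"
        unfolding w_def by (simp add: algebra_simps sum_subtractf sum_distrib_left)
      then show ?thesis using A_rowsum by (simp add: matrix_vector_mult_def)
    qed
    ultimately show ?thesis unfolding w_def d_def by simp
  qed
  have key: "w a \<le> 2 + A $ a $ r * w r + (1 - A $ a $ r) * M" for a r
  proof -
    have "(\<Sum>r'\<in>UNIV. A $ a $ r' * w r') = A $ a $ r * w r + (\<Sum>r'\<in>UNIV - {r}. A $ a $ r' * w r')"
      by (simp add: sum.remove)
    moreover have "(\<Sum>r'\<in>UNIV - {r}. A $ a $ r' * w r') \<le> (\<Sum>r'\<in>UNIV - {r}. A $ a $ r' * M)"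
      by (intro sum_mono mult_left_mono wM A_nonneg)
    moreover have "(\<Sum>r'\<in>UNIV - {r}. A $ a $ r' * M) = (1 - A $ a $ r) * M"
    proof -
      have "(\<Sum>r'\<in>UNIV. A $ a $ r') = A $ a $ r + (\<Sum>r'\<in>UNIV - {r}. A $ a $ r')"
        by (simp add: sum.remove)
      then have "(\<Sum>r'\<in>UNIV - {r}. A $ a $ r') = 1 - A $ a $ r" using A_rowsum[of a] by simp
      then show ?thesis by (simp add: sum_distrib_right[symmetric])
    qed
    ultimately show ?thesis using eq[of a] d2[of a] by linarith
  qed
  define b where "b k = 2 * real k + (1 - x ^ k) * M" for k
  have bmono: "b k \<le> b (Suc k)" for k
  proof -
    have "x ^ Suc k \<le> x ^ k" using xpos x1 by (simp add: mult_left_le_one_le)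
    then have "(1 - x ^ k) * M \<le> (1 - x ^ Suc k) * M" using M0 by (intro mult_right_mono) auto
    then show ?thesis unfolding b_def by simp
  qed
  have bstep: "w a \<le> b (Suc k)" if "A $ a $ r > 0" "w r \<le> b k" for a r k
  proof -
    let ?a = "A $ a $ r"
    have a1: "?a \<le> 1" using A_rowsum[of a] member_le_sum[of r UNIV "\<lambda>q. A $ a $ q"] A_nonneg by simp
    have xa: "x \<le> ?a" using xle that(1) by simp
    have "?a * w r \<le> ?a * b k" using that A_nonneg by (intro mult_left_mono) auto
    moreover have "b (Suc k) - (2 + ?a * b k + (1 - ?a) * M) = 2 * real k * (1 - ?a) + M * x ^ k * (?a - x)"
      unfolding b_def by (simp add: algebra_simps)
    moreover have "0 \<le> 2 * real k * (1 - ?a)" using a1 by simp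
    moreover have "0 \<le> M * x ^ k * (?a - x)" using M0 xpos xa by simp
    ultimately show ?thesis using key[of a r] by linarith
  qed
  define T where "T k = {p. w p \<le> b k}" for k
  have Tmono: "T k \<subseteq> T (Suc k)" for k unfolding T_def using bmono order_trans by fastforce
  have claim: "T k = UNIV \<or> k + 1 \<le> card (T k)" for k
  proof (induction k)
    case 0
    have "q1 \<in> T 0" unfolding T_def b_def using q1 by simp
    then have "T 0 \<noteq> {}" by auto
    then have "card (T 0) \<ge> 1" by (simp add: Suc_leI card_gt_0_iff)
    then show ?case by simp
  next
    case (Suc k)
    show ?case
    proof (cases "T k = UNIV")
      case True then show ?thesis using Tmono[of k] by auto
    next
      case False
      then obtain p where p: "p \<notin> T k" by auto
      have "q1 \<in> T k" unfolding T_def b_def using q1 M0 xpos x1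
        by (simp add: mult_nonneg_nonneg power_le_one)
      moreover have "(p, q1) \<in> {(p, q). A $ p $ q > 0}\<^sup>*"
        using sc unfolding strongly_connected_mat_def by blast
      ultimately obtain a r where ar: "A $ a $ r > 0" "a \<notin> T k" "r \<in> T k"
        using rtrancl_cross[OF _ p] by blast
      have "a \<in> T (Suc k)" using bstep[OF ar(1)] ar(3) unfolding T_def by auto
      then have sub: "insert a (T k) \<subseteq> T (Suc k)" using Tmono by auto
      have "card (insert a (T k)) = card (T k) + 1" using ar(2) by simp
      moreover have "card (insert a (T k)) \<le> card (T (Suc k))" using sub by (intro card_mono) auto
      ultimately show ?thesis using Suc False by simp
    qed
  qed
  define N where "N = CARD('q)"
  have N1: "N \<ge> 1" unfolding N_def by (simp add: Suc_leI)
  have "T (N - 1) = UNIV"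
  proof -
    have "T (N - 1) = UNIV \<or> N \<le> card (T (N - 1))" using claim[of "N - 1"] N1 by simp
    then show ?thesis using card_seteq[of UNIV "T (N - 1)"] unfolding N_def by auto
  qed
  then have "M \<le> b (N - 1)" using p1 unfolding T_def by auto
  also have "\<dots> \<le> b N" using bmono[of "N - 1"] N1 by simp
  finally have "x ^ N * M \<le> 2 * real N" unfolding b_def by (simp add: algebra_simps)
  then have "M \<le> 2 * real N / x ^ N" using xpos by (simp add: pos_le_divide_eq mult.commute)
  then show ?thesis unfolding M_def N_def x_def X_def .
qed

end

theorem mainTheorem9:
  fixes P :: "'q::finite \<Rightarrow> int \<Rightarrow> 'q \<Rightarrow> real" and \<alpha> :: "real^'q"
  assumes "pOC_pos P"
    and "strongly_connected_mat (trans_mat P)"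
    and "invariant_distribution (trans_mat P) \<alpha>"
  shows "invertible (mat 1 - trans_mat P + (\<chi> i j. \<alpha> $ j))
         \<and> potential (trans_mat P) (exp_change P) (\<alpha> \<bullet> exp_change P)
             (matrix_inv (mat 1 - trans_mat P + (\<chi> i j. \<alpha> $ j)) *v exp_change P)
         \<and> (\<exists>v. potential (trans_mat P) (exp_change P) (\<alpha> \<bullet> exp_change P) v
         \<and> vmax v - vmin v \<le> 2 * real CARD('q)
              / (Min {x. \<exists>p q. x = trans_mat P $ p $ q \<and> x \<noteq> 0}) ^ CARD('q))"
proof -
  interpret poc_setup P \<alpha> using assms by unfold_locales
  let ?K = "mat 1 - trans_mat P + (\<chi> i j. \<alpha> $ j)"
  have inv: "invertible ?K" by (rule K_invertible)
  then have "?K ** matrix_inv ?K = mat 1"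
    unfolding invertible_def matrix_inv_def by (rule someI_ex[THEN conjunct1])
  then have "?K *v (matrix_inv ?K *v exp_change P) = exp_change P"
    by (simp add: matrix_vector_mul_assoc)
  then have pot: "potential (trans_mat P) (exp_change P) (\<alpha> \<bullet> exp_change P)
             (matrix_inv ?K *v exp_change P)" by (rule potential_of_K)
  show ?thesis using inv pot bound_potential[OF pot] by blast
qed

end
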